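(* Let $P(x)=a_2x^2+a_1x+a_0$ and $R(x)=b_2x^2+b_1x$ be complex polynomials with $a_2,b_2\ne0$. For $n\ge0$ and $\alpha\in\mathbb C$ let $F(n,\alpha)=\prod_{z\in P^{-1}(R^{-n}(\alpha))}z$, the product of the $2^{n+1}$ roots, counted with multiplicity, of $R^{\circ n}(P(z))=\alpha$. Then $F(n,\alpha)=c_{n,1}\alpha+c_{n,0}$ with $c_{n,1}=-\frac{b_2}{(a_2b_2)^{2^n}}$ and $c_{n,0}=\frac{1}{(a_2b_2)^{2^n}}\big(H(n)-\frac{b_1}{2}\big)$, where $H(0)=a_0b_2+\frac{b_1}{2}$ and $H(n)=H(n-1)^2+\frac{b_1(2-b_1)}{4}$ for $n\ge1$.
   Context: $R^{\circ n}$ denotes the $n$-fold composition ($R^{\circ0}=\mathrm{id}$); $R^{-n}(\alpha)$ is the multiset of roots of $R^{\circ n}(w)=\alpha$ and $P^{-1}(S)$ the multiset union of the roots of $P(z)=w$ over $w\in S$. *)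

theory Defs
  imports "HOL-Computational_Algebra.Polynomial" "HOL-Library.Multiset" Complex_Main
begin

definition poly_iter :: "complex poly \<Rightarrow> nat \<Rightarrow> complex poly" where
  "poly_iter R n = ((\<lambda>q. pcompose R q) ^^ n) [:0, 1:]"

definition root_mset :: "complex poly \<Rightarrow> complex multiset" where
  "root_mset p = Abs_multiset (\<lambda>z. if p = 0 then 0 else order z p)"

definition Fprod :: "complex poly \<Rightarrow> complex poly \<Rightarrow> nat \<Rightarrow> complex \<Rightarrow> complex" where
  "Fprod P R n \<alpha> = prod_mset (root_mset (pcompose (poly_iter R n) P - [:\<alpha>:]))"

fun H :: "complex \<Rightarrow> complex \<Rightarrow> complex \<Rightarrow> nat \<Rightarrow> complex" where
  "H a0 b1 b2 0 = a0 * b2 + b1 / 2"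
| "H a0 b1 b2 (Suc n) = (H a0 b1 b2 n)^2 + b1 * (2 - b1) / 4"

end

theory Submission
  imports Defs "HOL-Computational_Algebra.Fundamental_Theorem_Algebra"
begin

lemma count_root_mset:
  assumes "p \<noteq> 0"
  shows "count (root_mset p) z = order z p"
proof -
  have "{x. 0 < order x p} = {x. poly p x = 0}"
    using assms order_root by auto
  then have "finite {x. 0 < order x p}" using poly_roots_finite[OF assms] by simp
  then show ?thesis unfolding root_mset_def using assms
    by (simp add: Abs_multiset_inverse)
qed

lemma order_lin: "order z [:-a, 1:] = (if z = a then 1 else (0::nat))"
proof (cases "z = a")
  case True
  then show ?thesis using order_power_n_n[of a 1] by simp
next
  case False
  then have "poly [:-a,1:] z \<noteq> 0" by simp
  then show ?thesis using False order_root by (metis)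
qed

lemma coeff0_roots:
  fixes p :: "complex poly"
  assumes "p \<noteq> 0"
  shows "coeff p 0 = lead_coeff p * (-1) ^ degree p * prod_mset (root_mset p)"
  using assms
proof (induction "degree p" arbitrary: p rule: less_induct)
  case less
  show ?case
  proof (cases "degree p = 0")
    case True
    then have pc: "p = [:coeff p 0:]" by (metis degree_0_id)
    then have "coeff p 0 \<noteq> 0" using less.prems by (metis pCons_0_0)
    then have "\<And>z. poly p z \<noteq> 0" using pc by (metis poly_const_conv)
    then have "\<And>z. order z p = 0" using order_root by blast
    then have "root_mset p = {#}" using count_root_mset[OF less.prems]
      by (simp add: multiset_eq_iff)
    then show ?thesis using True by simp
  next
    case False
    then have "\<not> constant (poly p)" using constant_degree[of p] by simp
    then obtain a where a: "poly p a = 0"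
      using fundamental_theorem_of_algebra by blast
    then obtain q where pq: "p = [:-a,1:] * q" using poly_eq_0_iff_dvd by (metis dvdE)
    have q0: "q \<noteq> 0" using pq less.prems by auto
    have dq: "degree p = Suc (degree q)" using pq q0 degree_mult_eq[of "[:-a,1:]" q] by (simp del: mult_pCons_left)
    have lq: "lead_coeff p = lead_coeff q" using pq lead_coeff_mult[of "[:-a,1:]" q] by (simp del: mult_pCons_left)
    have rm: "root_mset p = add_mset a (root_mset q)"
    proof (rule multiset_eqI)
      fix z
      show "count (root_mset p) z = count (add_mset a (root_mset q)) z"
        using count_root_mset[OF less.prems] count_root_mset[OF q0]
          order_mult[of "[:-a,1:]" q z] pq less.prems order_lin[of z a] by auto
    qed
    have IH: "coeff q 0 = lead_coeff q * (-1) ^ degree q * prod_mset (root_mset q)"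
      using less.hyps[of q] dq q0 by simp
    have "coeff p 0 = - a * coeff q 0" using pq coeff_mult_0[of "[:-a,1:]" q] by (simp del: mult_pCons_left)
    then show ?thesis using IH dq lq rm by simp
  qed
qed

lemma poly_iter_Suc: "poly_iter R (Suc n) = pcompose R (poly_iter R n)"
  by (simp add: poly_iter_def)

lemma iter_props:
  assumes "b2 \<noteq> 0"
  shows "degree (poly_iter [:0, b1, b2:] n) = 2 ^ n \<and>
         b2 * lead_coeff (poly_iter [:0, b1, b2:] n) = b2 ^ (2 ^ n)"
proof (induction n)
  case 0
  then show ?case by (simp add: poly_iter_def)
next
  case (Suc n)
  let ?R = "[:0, b1, b2:]" and ?I = "poly_iter [:0, b1, b2:] n"
  have dR: "degree ?R = 2" using assms by simp
  have d: "degree (pcompose ?R ?I) = 2 ^ Suc n"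
    using Suc dR by (simp add: degree_pcompose)
  have "lead_coeff (pcompose ?R ?I) = b2 * lead_coeff ?I ^ 2"
    using lead_coeff_comp[of ?I ?R] Suc dR assms by (simp add: power2_eq_square)
  then have "b2 * lead_coeff (pcompose ?R ?I) = b2 * (b2 * lead_coeff ?I ^ 2)"
    by simp
  also have "\<dots> = (b2 * lead_coeff ?I) ^ 2" by (simp add: power2_eq_square)
  also have "\<dots> = (b2 ^ (2 ^ n)) ^ 2" using Suc by metis
  also have "\<dots> = b2 ^ (2 ^ Suc n)" by (simp add: power_mult[symmetric] mult.commute)
  finally show ?case using d by (simp add: poly_iter_Suc)
qed

lemma iter_val:
  "b2 * poly (poly_iter [:0, b1, b2:] n) a0 = H a0 b1 b2 n - b1 / 2"
proof (induction n)
  case 0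
  then show ?case by (simp add: poly_iter_def)
next
  case (Suc n)
  let ?u = "poly (poly_iter [:0, b1, b2:] n) a0"
  have "b2 * poly (poly_iter [:0, b1, b2:] (Suc n)) a0 = b2 * (b1 * ?u + b2 * ?u * ?u)"
    by (simp add: poly_iter_Suc poly_pcompose algebra_simps)
  also have "\<dots> = (b2 * ?u) ^ 2 + b1 * (b2 * ?u)" by (simp add: algebra_simps power2_eq_square)
  also have "\<dots> = H a0 b1 b2 (Suc n) - b1 / 2"
  proof -
    have h: "H a0 b1 b2 n = b2 * ?u + b1 / 2" using Suc by simp
    show ?thesis unfolding H.simps h by (simp add: field_simps power2_eq_square)
  qed
  finally show ?case .
qed

theorem lemma5p5:
  fixes a0 a1 a2 b1 b2 :: complex and n :: nat
  assumes "a2 \<noteq> 0" and "b2 \<noteq> 0"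
  defines "P \<equiv> [:a0, a1, a2:]" and "R \<equiv> [:0, b1, b2:]"
  shows "\<exists>c1 c0. (\<forall>\<alpha>. Fprod P R n \<alpha> = c1 * \<alpha> + c0)
     \<and> c1 = - b2 / (a2 * b2) ^ (2 ^ n)
     \<and> c0 = (H a0 b1 b2 n - b1 / 2) / (a2 * b2) ^ (2 ^ n)"
proof -
  let ?I = "poly_iter R n"
  have dI: "degree ?I = 2 ^ n" and lI: "b2 * lead_coeff ?I = b2 ^ (2 ^ n)"
    using iter_props[OF assms(2), of b1 n] unfolding R_def by auto
  have dP: "degree P = 2" and lP: "lead_coeff P = a2" using assms(1) unfolding P_def by auto
  have dC: "degree (pcompose ?I P) = 2 ^ Suc n" using dI dP by (simp add: degree_pcompose)
  have lC: "lead_coeff (pcompose ?I P) = lead_coeff ?I * a2 ^ (2 ^ n)"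
    using lead_coeff_comp[of P ?I] dP lP dI by simp
  have cC: "coeff (pcompose ?I P) 0 = poly ?I a0"
    by (simp add: poly_0_coeff_0[symmetric] poly_pcompose P_def)
  have key: "Fprod P R n \<alpha> = (- b2 / (a2 * b2) ^ (2 ^ n)) * \<alpha> + (H a0 b1 b2 n - b1 / 2) / (a2 * b2) ^ (2 ^ n)" for \<alpha>
  proof -
    let ?Q = "pcompose ?I P - [:\<alpha>:]"
    have qe: "?Q = pcompose ?I P + [:-\<alpha>:]" by simp
    have dQ: "degree ?Q = 2 ^ Suc n" unfolding qe using dC
      by (subst degree_add_eq_left) auto
    have lQ: "lead_coeff ?Q = lead_coeff ?I * a2 ^ (2 ^ n)"
      using dQ dC lC by (simp add: coeff_diff coeff_pCons split: nat.split)
    have lI0: "lead_coeff ?I \<noteq> 0" using dI lI assms(2) by auto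
    have Q0: "?Q \<noteq> 0" using dQ by auto
    have c0: "coeff ?Q 0 = poly ?I a0 - \<alpha>" using cC by simp
    have ev: "(-1::complex) ^ degree ?Q = 1" using dQ by simp
    have "coeff ?Q 0 = lead_coeff ?Q * prod_mset (root_mset ?Q)"
      using coeff0_roots[OF Q0] ev by simp
    then have F: "Fprod P R n \<alpha> = (poly ?I a0 - \<alpha>) / (lead_coeff ?I * a2 ^ (2 ^ n))"
      unfolding Fprod_def using lQ c0 lI0 assms(1) by (simp add: field_simps)
    have D: "(a2 * b2) ^ (2 ^ n) = b2 * (lead_coeff ?I * a2 ^ (2 ^ n))"
      using lI by (simp add: power_mult_distrib algebra_simps)
    have HH: "H a0 b1 b2 n - b1 / 2 = b2 * poly ?I a0"
      using iter_val[of b2 b1 n a0] unfolding R_def by simp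
    have nz: "lead_coeff ?I * a2 ^ (2 ^ n) \<noteq> 0" using lI0 assms(1) by simp
    show ?thesis unfolding F D HH using nz assms(2)
      by (simp add: divide_simps)
  qed
  show ?thesis using key by blast
qed

end
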